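(* Let $G$ be a group with identity $e$, $A$ a set with at least two elements, and $\tau: A^G\to A^G$ a lazy cellular automaton. If $\mathrm{ord}(\tau) < \infty$, then the period of $\tau$ is $1$.
   Context: $A^G$ is the set of maps $G \to A$ with shift action $(g\cdot x)(h) := x(hg)$. A cellular automaton is a map $\tau : A^G \to A^G$ with a finite $S \subseteq G$ and $\mu : A^S \to A$ such that $\tau(x)(g) = \mu((g\cdot x)|_S)$. $\tau$ is lazy if there is such a local defining map $\mu : A^S \to A$ with $e \in S$ and $p \in A^S$ such that for all $z \in A^S$: $\mu(z) = z(e)$ iff $z \neq p$. $\tau^k$ is the $k$-fold composition, $\tau^0$ the identity; $\mathrm{ord}(\tau) := |\{\tau^k : k \in \mathbb{N}\}|$ with $\mathbb{N}=\{0,1,2,\dots\}$. If $\mathrm{ord}(\tau)<\infty$, the index $m \in \mathbb{N}$ and period $n \in \mathbb{Z}_+$ of $\tau$ are the smallest values such that $\tau^m = \tau^{m+n}$. *)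

theory Defs
  imports Main "HOL-Library.FuncSet"
begin

text \<open>The group G is the type 'g of class group_add (not necessarily abelian),
  written additively: the identity e is 0 and the product h g is h + g.\<close>

definition shift :: "'g::group_add \<Rightarrow> ('g \<Rightarrow> 'a) \<Rightarrow> ('g \<Rightarrow> 'a)" where
  "shift g x = (\<lambda>h. x (h + g))"

text \<open>tau is a cellular automaton with memory set S and local map mu : A^S -> A;
  elements of A^S are the extensional functions on S.\<close>
definition is_local_rule ::
  "(('g::group_add \<Rightarrow> 'a) \<Rightarrow> ('g \<Rightarrow> 'a)) \<Rightarrow> 'g set \<Rightarrow> (('g \<Rightarrow> 'a) \<Rightarrow> 'a) \<Rightarrow> bool" where
  "is_local_rule \<tau> S \<mu> \<longleftrightarrow> finite S \<and> (\<forall>x g. \<tau> x g = \<mu> (restrict (shift g x) S))"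

definition cellular_automaton :: "(('g::group_add \<Rightarrow> 'a) \<Rightarrow> ('g \<Rightarrow> 'a)) \<Rightarrow> bool" where
  "cellular_automaton \<tau> \<longleftrightarrow> (\<exists>S \<mu>. is_local_rule \<tau> S \<mu>)"

definition lazy :: "(('g::group_add \<Rightarrow> 'a) \<Rightarrow> ('g \<Rightarrow> 'a)) \<Rightarrow> bool" where
  "lazy \<tau> \<longleftrightarrow> (\<exists>S \<mu> p. is_local_rule \<tau> S \<mu> \<and> 0 \<in> S \<and>
      p \<in> (S \<rightarrow>\<^sub>E (UNIV :: 'a set)) \<and>
      (\<forall>z \<in> S \<rightarrow>\<^sub>E (UNIV :: 'a set). (\<mu> z = z 0 \<longleftrightarrow> z \<noteq> p)))"

definition finite_order :: "('b \<Rightarrow> 'b) \<Rightarrow> bool" where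
  "finite_order \<tau> \<longleftrightarrow> finite {\<tau> ^^ k | k. True}"

definition ca_index :: "('b \<Rightarrow> 'b) \<Rightarrow> nat" where
  "ca_index \<tau> = (LEAST m. \<exists>n>0. \<tau> ^^ m = \<tau> ^^ (m + n))"

definition ca_period :: "('b \<Rightarrow> 'b) \<Rightarrow> nat" where
  "ca_period \<tau> = (LEAST n. n > 0 \<and> \<tau> ^^ (ca_index \<tau>) = \<tau> ^^ (ca_index \<tau> + n))"

end

theory Submission
  imports Defs
begin

lemma exists_rep:
  assumes "finite_order (f :: 'b \<Rightarrow> 'b)"
  shows "\<exists>m n. n > 0 \<and> f ^^ m = f ^^ (m + n)"
proof -
  have "{f ^^ k | k. True} = range (\<lambda>k. f ^^ k)" by auto
  with assms have "finite (range (\<lambda>k::nat. f ^^ k))" by (simp add: finite_order_def)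
  hence "\<not> inj (\<lambda>k::nat. f ^^ k)" using finite_imageD infinite_UNIV_nat by blast
  then obtain i j :: nat where "i \<noteq> j" "f ^^ i = f ^^ j" unfolding inj_def by blast
  thus ?thesis
  proof (cases "i < j")
    case True
    then show ?thesis using \<open>f ^^ i = f ^^ j\<close> by (intro exI[of _ i] exI[of _ "j - i"]) auto
  next
    case False
    then have "j < i" using \<open>i \<noteq> j\<close> by simp
    then show ?thesis using \<open>f ^^ i = f ^^ j\<close> by (intro exI[of _ j] exI[of _ "i - j"]) auto
  qed
qed

lemma lazy_step:
  fixes \<tau> :: "('g::group_add \<Rightarrow> 'a) \<Rightarrow> ('g \<Rightarrow> 'a)"
  assumes "lazy \<tau>"
  obtains a b :: 'a where "a \<noteq> b" "\<And>x g. \<tau> x g = x g \<or> (x g = a \<and> \<tau> x g = b)"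
proof -
  obtain S \<mu> p where loc: "is_local_rule \<tau> S \<mu>" and S0: "0 \<in> S"
    and pE: "p \<in> (S \<rightarrow>\<^sub>E (UNIV :: 'a set))"
    and iff: "\<forall>z \<in> S \<rightarrow>\<^sub>E (UNIV :: 'a set). (\<mu> z = z 0 \<longleftrightarrow> z \<noteq> p)"
    using assms unfolding lazy_def by blast
  have ab: "p 0 \<noteq> \<mu> p" using iff pE by auto
  have "\<tau> x g = x g \<or> (x g = p 0 \<and> \<tau> x g = \<mu> p)" for x g
  proof -
    let ?z = "restrict (shift g x) S"
    have tz: "\<tau> x g = \<mu> ?z" using loc unfolding is_local_rule_def by blast
    have zE: "?z \<in> S \<rightarrow>\<^sub>E (UNIV :: 'a set)" by auto
    have z0: "?z 0 = x g" using S0 by (simp add: shift_def)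
    show ?thesis
    proof (cases "?z = p")
      case True
      then show ?thesis using tz z0 by auto
    next
      case False
      have "\<mu> ?z = ?z 0" using iff zE False by blast
      then show ?thesis using tz z0 by simp
    qed
  qed
  thus ?thesis using that ab by blast
qed

lemma key:
  fixes \<tau> :: "('g::group_add \<Rightarrow> 'a) \<Rightarrow> ('g \<Rightarrow> 'a)"
  assumes "lazy \<tau>" and "n > 0" and "(\<tau> ^^ n) y = y"
  shows "\<tau> y = y"
proof -
  obtain a b :: 'a where ab: "a \<noteq> b" and st: "\<And>x g. \<tau> x g = x g \<or> (x g = a \<and> \<tau> x g = b)"
    using lazy_step[OF assms(1)] by blast
  have stay: "(\<tau> ^^ k) x g = b" if "x g = b" for k x g
    using that proof (induction k)
    case 0 then show ?case by simp
  next
    case (Suc k)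
    then show ?case using st[of "(\<tau> ^^ k) x" g] ab by auto
  qed
  show ?thesis
  proof (rule ext, rule ccontr)
    fix g assume ne: "\<tau> y g \<noteq> y g"
    hence ya: "y g = a" and tb: "\<tau> y g = b" using st[of y g] by auto
    obtain k where nk: "n = Suc k" using assms(2) by (cases n) auto
    have "(\<tau> ^^ n) y = (\<tau> ^^ k) (\<tau> y)" using nk by (metis funpow_Suc_right o_apply)
    hence "(\<tau> ^^ n) y g = b" using stay[of "\<tau> y" g k] tb by simp
    thus False using assms(3) ya ab by simp
  qed
qed

theorem proposition2:
  fixes \<tau> :: "('g::group_add \<Rightarrow> 'a) \<Rightarrow> ('g \<Rightarrow> 'a)"
  assumes "\<exists>a b :: 'a. a \<noteq> b"
    and "cellular_automaton \<tau>"
    and "lazy \<tau>"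
    and "finite_order \<tau>"
  shows "ca_period \<tau> = 1"
proof -
  let ?m = "ca_index \<tau>"
  have "\<exists>n>0. \<tau> ^^ ?m = \<tau> ^^ (?m + n)"
    unfolding ca_index_def using exists_rep[OF assms(4)] by (rule LeastI_ex)
  then obtain n where n: "n > 0" "\<tau> ^^ ?m = \<tau> ^^ (?m + n)" by blast
  have "\<tau> ^^ (?m + 1) = \<tau> ^^ ?m"
  proof
    fix x
    let ?y = "(\<tau> ^^ ?m) x"
    have "(\<tau> ^^ n) ?y = ?y"
      using fun_cong[OF n(2), of x] by (simp add: funpow_add add.commute)
    hence "\<tau> ?y = ?y" using key[OF assms(3) n(1)] by blast
    thus "(\<tau> ^^ (?m + 1)) x = (\<tau> ^^ ?m) x" by simp
  qed
  hence "1 > (0::nat) \<and> \<tau> ^^ ?m = \<tau> ^^ (?m + 1)" by simp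
  hence "ca_period \<tau> \<le> 1" unfolding ca_period_def by (rule Least_le)
  moreover have "ca_period \<tau> > 0"
    unfolding ca_period_def using \<open>1 > (0::nat) \<and> \<tau> ^^ ?m = \<tau> ^^ (?m + 1)\<close>
    by (rule LeastI2) auto
  ultimately show ?thesis by simp
qed

end
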